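(* For all positive integers $m,n$, the complete bipartite graph $K_{m,n}$ is not $(m+2)$-solvable.
   Context: An undirected graph is identified with the directed graph having both arcs $(u,v)$ and $(v,u)$ for each edge. $N^-(v)$ denotes the set of (in-)neighbours of $v$. For $q\ge2$ let $[q]=\{0,\dots,q-1\}$. A $D$-function over $[q]$ is a map $f=(f_v)_{v\in V}:[q]^V\to[q]^V$ with each $f_v(x)$ depending only on $(x_u)_{u\in N^-(v)}$. $D$ is $q$-solvable if some $D$-function $f$ over $[q]$ has the property that for every $x\in[q]^V$ there is $v$ with $f_v(x)=x_v$. *)

theory Defs
  imports "HOL-Library.FuncSet"
begin

text \<open>A digraph is given by a vertex set V and an arc set E (pairs (u,v) = arc u to v).
  An undirected graph is the digraph with both arcs for each edge.\<close>

definition in_nbrs :: "'v set \<Rightarrow> ('v \<times> 'v) set \<Rightarrow> 'v \<Rightarrow> 'v set" where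
  "in_nbrs V E v = {u \<in> V. (u, v) \<in> E}"

definition configs :: "'v set \<Rightarrow> nat \<Rightarrow> ('v \<Rightarrow> nat) set" where
  "configs V q = (V \<rightarrow>\<^sub>E {0..<q})"

definition is_D_function :: "'v set \<Rightarrow> ('v \<times> 'v) set \<Rightarrow> nat \<Rightarrow> (('v \<Rightarrow> nat) \<Rightarrow> ('v \<Rightarrow> nat)) \<Rightarrow> bool" where
  "is_D_function V E q f \<longleftrightarrow>
     (\<forall>x \<in> configs V q. f x \<in> configs V q) \<and>
     (\<forall>v \<in> V. \<forall>x \<in> configs V q. \<forall>y \<in> configs V q.
        (\<forall>u \<in> in_nbrs V E v. x u = y u) \<longrightarrow> f x v = f y v)"

definition q_solvable :: "'v set \<Rightarrow> ('v \<times> 'v) set \<Rightarrow> nat \<Rightarrow> bool" where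
  "q_solvable V E q \<longleftrightarrow>
     (\<exists>f. is_D_function V E q f \<and> (\<forall>x \<in> configs V q. \<exists>v \<in> V. f x v = x v))"

definition Kbip_V :: "nat \<Rightarrow> nat \<Rightarrow> (nat + nat) set" where
  "Kbip_V m n = Inl ` {..<m} \<union> Inr ` {..<n}"

definition Kbip_E :: "nat \<Rightarrow> nat \<Rightarrow> ((nat + nat) \<times> (nat + nat)) set" where
  "Kbip_E m n = {(Inl i, Inr j) | i j. i < m \<and> j < n} \<union> {(Inr j, Inl i) | i j. i < m \<and> j < n}"

end

theory Submission
  imports Defs
begin

lemma avoid_exists:
  fixes S :: "nat set"
  assumes "finite S" "card S < q"
  shows "\<exists>c. c < q \<and> c \<notin> S"
proof (rule ccontr)
  assume "\<not> ?thesis"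
  then have "{0..<q} \<subseteq> S" by auto
  then have "card {0..<q} \<le> card S" using assms(1) by (rule card_mono[rotated])
  then show False using assms(2) by simp
qed

theorem corollary11:
  fixes m n :: nat
  assumes "m \<ge> 1" and "n \<ge> 1"
  shows "\<not> q_solvable (Kbip_V m n) (Kbip_E m n) (m + 2)"
proof
  define V where "V = Kbip_V m n"
  define E where "E = Kbip_E m n"
  assume "q_solvable (Kbip_V m n) (Kbip_E m n) (m + 2)"
  then obtain f where fD: "is_D_function V E (m+2) f"
    and sol: "\<forall>x \<in> configs V (m+2). \<exists>v \<in> V. f x v = x v"
    unfolding q_solvable_def V_def E_def by blast
  have dep: "\<And>v x y. v \<in> V \<Longrightarrow> x \<in> configs V (m+2) \<Longrightarrow> y \<in> configs V (m+2) \<Longrightarrow>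
      (\<forall>u \<in> in_nbrs V E v. x u = y u) \<Longrightarrow> f x v = f y v"
    using fD unfolding is_D_function_def by blast
  have nL: "\<And>a u. u \<in> in_nbrs V E (Inl a) \<Longrightarrow> \<exists>b. u = Inr b"
    unfolding in_nbrs_def E_def Kbip_E_def by auto
  have nR: "\<And>b u. u \<in> in_nbrs V E (Inr b) \<Longrightarrow> \<exists>a. u = Inl a"
    unfolding in_nbrs_def E_def Kbip_E_def by auto
  have Vchar: "\<And>v. v \<in> V \<longleftrightarrow> (\<exists>a<m. v = Inl a) \<or> (\<exists>b<n. v = Inr b)"
    unfolding V_def Kbip_V_def by auto
  define mk :: "nat \<Rightarrow> (nat \<Rightarrow> nat) \<Rightarrow> (nat + nat \<Rightarrow> nat)" where
    "mk k g = restrict (\<lambda>v. case v of Inl _ \<Rightarrow> k | Inr b \<Rightarrow> g b) V" for k g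
  have mk_conf: "mk k g \<in> configs V (m+2)" if "k < m+2" "\<And>b. b < n \<Longrightarrow> g b < m+2" for k g
    using that unfolding configs_def mk_def by (auto simp: Vchar)
  have mkL: "mk k g (Inl a) = k" if "a < m" for k g a
    using that unfolding mk_def by (auto simp: Vchar)
  have mkR: "mk k g (Inr b) = g b" if "b < n" for k g b
    using that unfolding mk_def by (auto simp: Vchar)
  define t where "t k = mk k (\<lambda>_. 0)" for k
  define c where "c b = (SOME c. c < m+2 \<and> c \<notin> (\<lambda>k. f (t k) (Inr b)) ` {0..m})" for b
  have c: "c b < m+2 \<and> c b \<notin> (\<lambda>k. f (t k) (Inr b)) ` {0..m}" for b
  proof -
    have "card ((\<lambda>k. f (t k) (Inr b)) ` {0..m}) \<le> m+1"
      by (rule order_trans[OF card_image_le]) simp_all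
    then have "\<exists>c. c < m+2 \<and> c \<notin> (\<lambda>k. f (t k) (Inr b)) ` {0..m}"
      by (intro avoid_exists) auto
    then show ?thesis unfolding c_def by (rule someI_ex)
  qed
  define x0 where "x0 = mk 0 c"
  have x0c: "x0 \<in> configs V (m+2)" unfolding x0_def using c by (intro mk_conf) auto
  have "card ((\<lambda>a. f x0 (Inl a)) ` {..<m}) \<le> m"
    by (rule order_trans[OF card_image_le]) simp_all
  then obtain k where k: "k < m+1" "k \<notin> (\<lambda>a. f x0 (Inl a)) ` {..<m}"
    using avoid_exists[of "(\<lambda>a. f x0 (Inl a)) ` {..<m}" "m+1"] by auto
  define x where "x = mk k c"
  have xc: "x \<in> configs V (m+2)" unfolding x_def using c k by (intro mk_conf) auto
  have tc: "t k \<in> configs V (m+2)" unfolding t_def using k by (intro mk_conf) auto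
  from sol xc obtain v where v: "v \<in> V" "f x v = x v" by blast
  from v(1) show False unfolding Vchar
  proof (elim disjE exE conjE)
    fix a assume a: "a < m" "v = Inl a"
    have "f x v = f x0 v"
    proof (rule dep[OF v(1) xc x0c], rule ballI)
      fix u assume "u \<in> in_nbrs V E v"
      then obtain b where b: "u = Inr b" using nL a(2) by blast
      then have "b < n" using \<open>u \<in> in_nbrs V E v\<close> unfolding in_nbrs_def by (auto simp: Vchar)
      then show "x u = x0 u" unfolding b x_def x0_def by (simp add: mkR)
    qed
    then show False using v(2) a k(2) mkL[OF a(1)] x_def by auto
  next
    fix b assume b: "b < n" "v = Inr b"
    have "f x v = f (t k) v"
    proof (rule dep[OF v(1) xc tc], rule ballI)
      fix u assume "u \<in> in_nbrs V E v"
      then obtain a where a: "u = Inl a" using nR b(2) by blast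
      then have "a < m" using \<open>u \<in> in_nbrs V E v\<close> unfolding in_nbrs_def by (auto simp: Vchar)
      then show "x u = t k u" unfolding a x_def t_def by (simp add: mkL)
    qed
    moreover have "x v = c b" using b mkR x_def by simp
    moreover have "f (t k) (Inr b) \<in> (\<lambda>k. f (t k) (Inr b)) ` {0..m}" using k(1) by auto
    ultimately show False using v(2) c[of b] b(2) by auto
  qed
qed

end
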